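(* The tent transform $\mathcal{R}f(y)=f(|2y-1|)$ maps $H^2([0,1])$ continuously into the classical Korobov space $\mathbf{E}^2(\mathbb{T})$: there is a constant $C>0$ such that for all $f\in H^2([0,1])$, $\sup_{k\in\mathbb{Z}}|\widehat{\mathcal{R}f}(k)|(1+|k|)^2\le C\|f\|_{H^2([0,1])}$.
   Context: $H^2([0,1])=\{f\in L_2([0,1]):f''\in L_2([0,1])\}$ with $f''$ the second weak derivative, normed by $\|f\|^2_{H^2([0,1])}=\|f\|^2_{L_2}+\|f''\|^2_{L_2}$ (this is $H^2_{\mathrm{mix}}([0,1])$ for $d=1$). $\mathbb{T}$ is identified with $[0,1)$; for $g\in L_1(\mathbb{T})$, $\hat g(k)=\int_0^1 g(x)e^{-2\pi i kx}\,dx$. The classical Korobov space $\mathbf{E}^2(\mathbb{T})$ consists of $g$ with finite norm $\|g\|_{\mathbf{E}^2}=\sup_{k\in\mathbb{Z}}|\hat g(k)|(1+|k|)^2$. *)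

theory Defs
  imports "HOL-Analysis.Analysis"
begin

definition test_fun :: "(real \<Rightarrow> real) \<Rightarrow> bool" where
  "test_fun \<phi> \<longleftrightarrow> (\<forall>n x. (deriv ^^ n) \<phi> differentiable (at x)) \<and>
     (\<exists>a b. 0 < a \<and> a \<le> b \<and> b < 1 \<and> (\<forall>x. x \<notin> {a..b} \<longrightarrow> \<phi> x = 0))"

definition L2_01 :: "(real \<Rightarrow> real) \<Rightarrow> bool" where
  "L2_01 f \<longleftrightarrow> f \<in> borel_measurable (lebesgue_on {0..1}) \<and>
     integrable (lebesgue_on {0..1}) (\<lambda>x. (f x)\<^sup>2)"

text \<open>g is the second weak derivative of f on (0,1), both in L2([0,1]);
  i.e. f belongs to H^2([0,1]) with f'' = g.\<close>
definition H2_with_deriv :: "(real \<Rightarrow> real) \<Rightarrow> (real \<Rightarrow> real) \<Rightarrow> bool" where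
  "H2_with_deriv f g \<longleftrightarrow> L2_01 f \<and> L2_01 g \<and>
     (\<forall>\<phi>. test_fun \<phi> \<longrightarrow>
        integral\<^sup>L (lebesgue_on {0..1}) (\<lambda>x. f x * deriv (deriv \<phi>) x)
        = integral\<^sup>L (lebesgue_on {0..1}) (\<lambda>x. g x * \<phi> x))"

definition H2_norm :: "(real \<Rightarrow> real) \<Rightarrow> (real \<Rightarrow> real) \<Rightarrow> real" where
  "H2_norm f g = sqrt (integral\<^sup>L (lebesgue_on {0..1}) (\<lambda>x. (f x)\<^sup>2)
                     + integral\<^sup>L (lebesgue_on {0..1}) (\<lambda>x. (g x)\<^sup>2))"

definition tent :: "(real \<Rightarrow> real) \<Rightarrow> real \<Rightarrow> real" where
  "tent f y = f \<bar>2 * y - 1\<bar>"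

text \<open>Fourier coefficient on the torus identified with [0,1).\<close>
definition fourier_coeff :: "(real \<Rightarrow> complex) \<Rightarrow> int \<Rightarrow> complex" where
  "fourier_coeff h k = integral\<^sup>L (lebesgue_on {0..1})
      (\<lambda>x. h x * exp (- (2 * pi * \<i> * of_int k * of_real x)))"

end

theory Submission
  imports Defs "HOL-Computational_Algebra.Polynomial"
begin


definition Ck :: "nat \<Rightarrow> (real \<Rightarrow> real) \<Rightarrow> bool" where
  "Ck n f \<longleftrightarrow> (\<forall>j\<le>n. \<forall>x. (deriv^^j) f differentiable (at x))"

lemma Ck_0: "Ck 0 f \<longleftrightarrow> (\<forall>x. f differentiable (at x))"
  by (simp add: Ck_def)

lemma Ck_Suc: "Ck (Suc n) f \<longleftrightarrow> (\<forall>x. f differentiable (at x)) \<and> Ck n (deriv f)"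
proof -
  have e: "(deriv^^j) (deriv f) = (deriv^^(Suc j)) f" for j
    by (simp add: funpow_Suc_right del: funpow.simps)
  show ?thesis unfolding Ck_def e
    by (metis (no_types, lifting) Suc_le_mono funpow_0 le0 not0_implies_Suc)
qed

lemma Ck_mono: "Ck n f \<Longrightarrow> m \<le> n \<Longrightarrow> Ck m f"
  by (auto simp: Ck_def)

lemma Ck_diff: "Ck n f \<Longrightarrow> f differentiable (at x)"
  by (auto simp: Ck_def dest: spec[of _ 0])

lemma deriv_add_fun:
  fixes f g :: "real \<Rightarrow> real"
  assumes "\<And>x. f differentiable (at x)" "\<And>x. g differentiable (at x)"
  shows "deriv (\<lambda>x. f x + g x) = (\<lambda>x. deriv f x + deriv g x)"
proof
  fix x
  have "(f has_real_derivative deriv f x) (at x)" "(g has_real_derivative deriv g x) (at x)"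
    using assms DERIV_deriv_iff_real_differentiable by blast+
  then show "deriv (\<lambda>x. f x + g x) x = deriv f x + deriv g x"
    by (intro DERIV_imp_deriv) (auto intro!: derivative_eq_intros)
qed

lemma deriv_mult_fun:
  fixes f g :: "real \<Rightarrow> real"
  assumes "\<And>x. f differentiable (at x)" "\<And>x. g differentiable (at x)"
  shows "deriv (\<lambda>x. f x * g x) = (\<lambda>x. deriv f x * g x + f x * deriv g x)"
proof
  fix x
  have "(f has_real_derivative deriv f x) (at x)" "(g has_real_derivative deriv g x) (at x)"
    using assms DERIV_deriv_iff_real_differentiable by blast+
  then show "deriv (\<lambda>x. f x * g x) x = deriv f x * g x + f x * deriv g x"
    by (intro DERIV_imp_deriv) (auto intro!: derivative_eq_intros)
qed

lemma Ck_add: "Ck n f \<Longrightarrow> Ck n g \<Longrightarrow> Ck n (\<lambda>x. f x + g x)"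
proof (induction n arbitrary: f g)
  case 0
  then show ?case by (auto simp: Ck_0)
next
  case (Suc n)
  then have d: "\<And>x. f differentiable (at x)" "\<And>x. g differentiable (at x)"
    and c: "Ck n (deriv f)" "Ck n (deriv g)" by (auto simp: Ck_Suc)
  show ?case unfolding Ck_Suc deriv_add_fun[OF d]
    using Suc.IH[OF c] d by auto
qed

lemma Ck_mult: "Ck n f \<Longrightarrow> Ck n g \<Longrightarrow> Ck n (\<lambda>x. f x * g x)"
proof (induction n arbitrary: f g)
  case 0
  then show ?case by (auto simp: Ck_0)
next
  case (Suc n)
  then have d: "\<And>x. f differentiable (at x)" "\<And>x. g differentiable (at x)"
    and c: "Ck n (deriv f)" "Ck n (deriv g)" by (auto simp: Ck_Suc)
  have c2: "Ck n f" "Ck n g" using Suc.prems Ck_mono le_SucI by blast+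
  show ?case unfolding Ck_Suc deriv_mult_fun[OF d]
    using Suc.IH[OF c(1) c2(2)] Suc.IH[OF c2(1) c(2)] d
    by (auto intro!: Ck_add)
qed

lemma Ck_const: "Ck n (\<lambda>x. c)"
proof (induction n arbitrary: c)
  case 0 then show ?case by (simp add: Ck_0)
next
  case (Suc n)
  have "deriv (\<lambda>x. c) = (\<lambda>x. 0)" by (simp add: fun_eq_iff)
  then show ?case using Suc by (simp add: Ck_Suc)
qed

lemma Ck_id: "Ck n (\<lambda>x. x)"
proof (cases n)
  case 0 then show ?thesis by (simp add: Ck_0)
next
  case (Suc m)
  have "deriv (\<lambda>x. x) = (\<lambda>x. 1)" by (simp add: fun_eq_iff)
  then show ?thesis using Suc by (simp add: Ck_Suc Ck_const)
qed

lemma Ck_cmult: "Ck n f \<Longrightarrow> Ck n (\<lambda>x. c * f x)"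
  using Ck_mult[OF Ck_const] by blast

lemma Ck_minus: "Ck n f \<Longrightarrow> Ck n (\<lambda>x. - f x)"
  using Ck_cmult[of n f "-1"] by simp

lemma Ck_diff_fun: "Ck n f \<Longrightarrow> Ck n g \<Longrightarrow> Ck n (\<lambda>x. f x - g x)"
  using Ck_add[OF _ Ck_minus] by (simp add: )

lemma Ck_inverse: "Ck n f \<Longrightarrow> (\<And>x. f x \<noteq> 0) \<Longrightarrow> Ck n (\<lambda>x. inverse (f x))"
proof (induction n arbitrary: f)
  case 0
  then show ?case by (auto simp: Ck_0 intro!: derivative_intros)
next
  case (Suc n)
  then have d: "\<And>x. f differentiable (at x)" and c: "Ck n (deriv f)" by (auto simp: Ck_Suc)
  have c2: "Ck n f" using Suc.prems Ck_mono le_SucI by blast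
  have dd: "deriv (\<lambda>x. inverse (f x)) = (\<lambda>x. - (deriv f x * (inverse (f x) * inverse (f x))))"
  proof
    fix x
    have "(f has_real_derivative deriv f x) (at x)"
      using d DERIV_deriv_iff_real_differentiable by blast
    then show "deriv (\<lambda>x. inverse (f x)) x = - (deriv f x * (inverse (f x) * inverse (f x)))"
      using Suc.prems(2)[of x]
      by (intro DERIV_imp_deriv) (auto intro!: derivative_eq_intros simp: power2_eq_square)
  qed
  have i: "Ck n (\<lambda>x. inverse (f x))" using Suc.IH[OF c2] Suc.prems by blast
  have "\<forall>x. (\<lambda>x. inverse (f x)) differentiable (at x)"
    using d Suc.prems(2) by (auto intro!: derivative_intros)
  then show ?case unfolding Ck_Suc dd
    by (auto intro!: Ck_minus Ck_mult c i)
qed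

lemma Ck_affine_diff:
  fixes f :: "real \<Rightarrow> real"
  assumes "\<And>x. f differentiable (at x)"
  shows "(\<lambda>x. f (a * x + b)) differentiable (at x)"
proof -
  have "(f has_real_derivative deriv f (a*x+b)) (at (a*x+b))"
    using assms DERIV_deriv_iff_real_differentiable by blast
  moreover have "((\<lambda>x. a*x+b) has_real_derivative a) (at x)" by (auto intro!: derivative_eq_intros)
  ultimately have "((\<lambda>x. f (a * x + b)) has_real_derivative deriv f (a*x+b) * a) (at x)"
    using DERIV_chain2[of f "deriv f (a*x+b)" "\<lambda>x. a*x+b" x a UNIV] by simp
  then show ?thesis using real_differentiable_def by blast
qed

lemma Ck_affine: "Ck n f \<Longrightarrow> Ck n (\<lambda>x. f (a * x + b))"
proof (induction n arbitrary: f)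
  case 0
  then show ?case
    using Ck_affine_diff by (auto simp: Ck_0)
next
  case (Suc n)
  then have d: "\<And>x. f differentiable (at x)" and c: "Ck n (deriv f)" by (auto simp: Ck_Suc)
  have dd: "deriv (\<lambda>x. f (a * x + b)) = (\<lambda>x. a * deriv f (a * x + b))"
  proof
    fix x
    have "(f has_real_derivative deriv f (a*x+b)) (at (a*x+b))"
      using d DERIV_deriv_iff_real_differentiable by blast
    moreover have "((\<lambda>x. a*x+b) has_real_derivative a) (at x)" by (auto intro!: derivative_eq_intros)
    ultimately have "((\<lambda>x. f (a * x + b)) has_real_derivative deriv f (a*x+b) * a) (at x)"
      using DERIV_chain2[of f "deriv f (a*x+b)" "\<lambda>x. a*x+b" x a UNIV] by simp
    then show "deriv (\<lambda>x. f (a * x + b)) x = a * deriv f (a * x + b)"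
      by (simp add: DERIV_imp_deriv mult.commute)
  qed
  have "\<forall>x. (\<lambda>x. f (a * x + b)) differentiable (at x)"
    using d Ck_affine_diff by blast
  then show ?case unfolding Ck_Suc dd
    using Suc.IH[OF c] by (auto intro!: Ck_cmult)
qed

lemma Ck_seq:
  assumes "F 0 = f" "\<And>n x. (F n has_real_derivative F (Suc n) x) (at x)"
  shows "Ck n f"
proof -
  have "(deriv^^j) f = F j" for j
  proof (induction j)
    case 0 then show ?case using assms by simp
  next
    case (Suc j)
    have "(deriv^^Suc j) f = deriv (F j)" using Suc.IH by simp
    also have "\<dots> = F (Suc j)" by (rule ext) (rule DERIV_imp_deriv[OF assms(2)])
    finally show ?case .
  qed
  then show ?thesis unfolding Ck_def using assms(2) real_differentiable_def by metis
qed

lemma Ck_cos: "Ck n cos"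
proof (rule Ck_seq[where F="\<lambda>n x. cos (x + real n * (pi/2))"])
  show "(\<lambda>x. cos (x + real 0 * (pi/2))) = cos" by simp
  fix n x
  have "x + real (Suc n) * (pi/2) = (x + real n * (pi/2)) + pi/2" by (simp add: algebra_simps)
  then have "cos (x + real (Suc n) * (pi/2)) = - sin (x + real n * (pi/2))"
    by (simp only: cos_add) simp
  then show "((\<lambda>x. cos (x + real n * (pi/2))) has_real_derivative cos (x + real (Suc n) * (pi/2))) (at x)"
    by (auto intro!: derivative_eq_intros)
qed


definition psi :: "real \<Rightarrow> real" where
  "psi x = (if x \<le> 0 then 0 else exp (- inverse x))"

fun Pb :: "nat \<Rightarrow> real poly" where
  "Pb 0 = 1"
| "Pb (Suc n) = [:0,0,1:] * (Pb n - pderiv (Pb n))"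

definition Fb :: "nat \<Rightarrow> real \<Rightarrow> real" where
  "Fb n x = (if x \<le> 0 then 0 else poly (Pb n) (inverse x) * exp (- inverse x))"

lemma poly_exp_at_top: "((\<lambda>z. poly Q z * exp (- z)) \<longlongrightarrow> (0::real)) at_top"
proof -
  have "((\<lambda>z. \<Sum>i\<le>degree Q. coeff Q i * (z ^ i / exp z)) \<longlongrightarrow> 0) at_top"
    by (intro tendsto_null_sum) (use tendsto_mult[OF tendsto_const tendsto_power_div_exp_0] in simp)
  moreover have "poly Q z * exp (- z) = (\<Sum>i\<le>degree Q. coeff Q i * (z ^ i / exp z))" for z
    by (simp add: poly_altdef sum_distrib_right sum_divide_distrib exp_minus divide_inverse mult.assoc)
  ultimately show ?thesis by simp
qed

lemma poly_exp_at_right: "((\<lambda>y. poly Q (inverse y) * exp (- inverse y)) \<longlongrightarrow> (0::real)) (at_right 0)"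
  using filterlim_compose[OF poly_exp_at_top filterlim_inverse_at_top_right] by simp

lemma Fb_deriv_pos:
  assumes "x > 0"
  shows "(Fb n has_real_derivative Fb (Suc n) x) (at x)"
proof -
  let ?g = "\<lambda>x. poly (Pb n) (inverse x) * exp (- inverse x)"
  have "(?g has_real_derivative
     poly (pderiv (Pb n)) (inverse x) * (- inverse (x^2)) * exp (- inverse x)
     + poly (Pb n) (inverse x) * (exp (- inverse x) * inverse (x^2))) (at x)"
    using assms
    by (auto intro!: derivative_eq_intros DERIV_chain2[OF poly_DERIV] simp: power2_eq_square field_simps)
  moreover have "poly (pderiv (Pb n)) (inverse x) * (- inverse (x^2)) * exp (- inverse x)
     + poly (Pb n) (inverse x) * (exp (- inverse x) * inverse (x^2)) = Fb (Suc n) x"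
    using assms by (simp add: Fb_def power2_eq_square field_simps)
  ultimately have "(?g has_real_derivative Fb (Suc n) x) (at x)" by simp
  then show ?thesis
    by (rule has_field_derivative_transform_within_open[where S="{0<..}"]) (use assms in \<open>auto simp: Fb_def\<close>)
qed

lemma Fb_deriv_neg:
  assumes "x < 0"
  shows "(Fb n has_real_derivative Fb (Suc n) x) (at x)"
proof -
  have "((\<lambda>x. 0) has_real_derivative 0) (at x)" by simp
  then have "(Fb n has_real_derivative 0) (at x)"
    by (rule has_field_derivative_transform_within_open[where S="{..<0}"]) (use assms in \<open>auto simp: Fb_def\<close>)
  then show ?thesis using assms by (simp add: Fb_def)
qed

lemma Fb_deriv_zero:
  "(Fb n has_real_derivative Fb (Suc n) 0) (at 0)"
proof -
  have "((\<lambda>y. (Fb n y - Fb n 0) / (y - 0)) \<longlongrightarrow> 0) (at_left 0)"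
  proof (rule tendsto_eventually)
    show "\<forall>\<^sub>F y in at_left 0. (Fb n y - Fb n 0) / (y - 0) = (0::real)"
      by (auto simp: eventually_at_left_field Fb_def intro!: exI[of _ "-1"])
  qed
  moreover have "((\<lambda>y. (Fb n y - Fb n 0) / (y - 0)) \<longlongrightarrow> 0) (at_right 0)"
  proof -
    have "((\<lambda>y. poly ([:0,1:] * Pb n) (inverse y) * exp (- inverse y)) \<longlongrightarrow> (0::real)) (at_right 0)"
      by (rule poly_exp_at_right)
    moreover have "\<forall>\<^sub>F y in at_right 0. poly ([:0,1:] * Pb n) (inverse y) * exp (- inverse y)
        = (Fb n y - Fb n 0) / (y - 0)"
      by (auto simp: eventually_at_right_field Fb_def field_simps intro!: exI[of _ 1])
    ultimately show ?thesis by (rule Lim_transform_eventually)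
  qed
  ultimately have "((\<lambda>y. (Fb n y - Fb n 0) / (y - 0)) \<longlongrightarrow> 0) (at 0)"
    by (simp add: filterlim_at_split)
  then show ?thesis by (simp add: has_field_derivative_iff Fb_def)
qed

lemma Fb_deriv: "(Fb n has_real_derivative Fb (Suc n) x) (at x)"
  using Fb_deriv_pos Fb_deriv_neg Fb_deriv_zero by (cases "x > 0"; cases "x < 0") auto

lemma Ck_psi: "Ck n psi"
  by (rule Ck_seq[where F=Fb]) (simp add: Fb_def psi_def fun_eq_iff, rule Fb_deriv)


definition chi :: "real \<Rightarrow> real" where
  "chi x = psi x * inverse (psi x + psi (1 - x))"

lemma psi_nonneg: "psi x \<ge> 0" by (simp add: psi_def)
lemma psi_pos: "x > 0 \<Longrightarrow> psi x > 0" by (simp add: psi_def)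
lemma psi_zero: "x \<le> 0 \<Longrightarrow> psi x = 0" by (simp add: psi_def)

lemma denom_pos: "psi x + psi (1 - x) > 0"
  using psi_pos[of x] psi_pos[of "1-x"] psi_nonneg[of x] psi_nonneg[of "1-x"]
  by (cases "x > 0") auto

lemma Ck_chi: "Ck n chi"
proof -
  have a: "Ck n (\<lambda>x. psi ((-1) * x + 1))" by (rule Ck_affine[OF Ck_psi])
  have "Ck n (\<lambda>x. psi x + psi ((-1) * x + 1))" by (rule Ck_add[OF Ck_psi a])
  then have "Ck n (\<lambda>x. inverse (psi x + psi ((-1) * x + 1)))"
    by (rule Ck_inverse) (use denom_pos in \<open>simp add: less_imp_neq[symmetric]\<close>)
  then have "Ck n (\<lambda>x. psi x * inverse (psi x + psi ((-1) * x + 1)))"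
    by (rule Ck_mult[OF Ck_psi])
  then show ?thesis by (simp add: chi_def[abs_def])
qed

lemma chi_le0: "x \<le> 0 \<Longrightarrow> chi x = 0" by (simp add: chi_def psi_zero)
lemma chi_ge1: "x \<ge> 1 \<Longrightarrow> chi x = 1"
  using denom_pos[of x] by (simp add: chi_def psi_zero)
lemma chi_bounds: "0 \<le> chi x" "chi x \<le> 1"
  using denom_pos[of x] psi_nonneg[of x] psi_nonneg[of "1-x"]
  by (auto simp: chi_def field_simps)

definition chi1 :: "real \<Rightarrow> real" where "chi1 = deriv chi"
definition chi2 :: "real \<Rightarrow> real" where "chi2 = deriv chi1"

lemma chi_deriv: "(chi has_real_derivative chi1 x) (at x)"
  using Ck_diff[OF Ck_chi[of 0], of x] DERIV_deriv_iff_real_differentiable[of chi x] chi1_def by simp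

lemma Ck_chi1: "Ck n chi1"
  using Ck_chi[of "Suc n"] by (simp add: Ck_Suc chi1_def)

lemma chi1_deriv: "(chi1 has_real_derivative chi2 x) (at x)"
  using Ck_diff[OF Ck_chi1[of 0], of x] DERIV_deriv_iff_real_differentiable[of chi1 x] chi2_def by simp

lemma Ck_chi2: "Ck n chi2"
  using Ck_chi1[of "Suc n"] by (simp add: Ck_Suc chi2_def)

lemma chi2_deriv: "(chi2 has_real_derivative deriv chi2 x) (at x)"
  using Ck_diff[OF Ck_chi2[of 0], of x] DERIV_deriv_iff_real_differentiable[of chi2 x] by simp

lemma cont_chi1: "continuous_on S chi1"
  using chi_deriv chi1_deriv
  by (meson DERIV_isCont continuous_at_imp_continuous_on)

lemma cont_chi2: "continuous_on S chi2"
  using chi2_deriv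
  by (meson DERIV_isCont continuous_at_imp_continuous_on)

lemma chi1_out: "x < 0 \<or> x > 1 \<Longrightarrow> chi1 x = 0"
proof -
  assume x: "x < 0 \<or> x > 1"
  show ?thesis
  proof (cases "x < 0")
    case True
    have "((\<lambda>x. 0) has_real_derivative 0) (at x)" by simp
    then have "(chi has_real_derivative 0) (at x)"
      by (rule has_field_derivative_transform_within_open[where S="{..<0}"]) (use True chi_le0 in auto)
    then show ?thesis using chi_deriv DERIV_unique by blast
  next
    case False
    then have x1: "x > 1" using x by auto
    have "((\<lambda>x. 1) has_real_derivative 0) (at x)" by simp
    then have "(chi has_real_derivative 0) (at x)"
      by (rule has_field_derivative_transform_within_open[where S="{1<..}"]) (use x1 chi_ge1 in auto)
    then show ?thesis using chi_deriv DERIV_unique by blast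
  qed
qed

lemma chi2_out: "x < 0 \<or> x > 1 \<Longrightarrow> chi2 x = 0"
proof -
  assume x: "x < 0 \<or> x > 1"
  have "((\<lambda>x. 0) has_real_derivative 0) (at x)" by simp
  then have "(chi1 has_real_derivative 0) (at x)"
  proof (rule has_field_derivative_transform_within_open[where S="{..<0} \<union> {1<..}"])
    show "open ({..<(0::real)} \<union> {1<..})" by auto
    show "x \<in> {..<0} \<union> {1<..}" using x by auto
  qed (use chi1_out in auto)
  then show ?thesis using chi1_deriv DERIV_unique by blast
qed

lemma chi_derivs_bounded: "\<exists>M>0. \<forall>x. \<bar>chi1 x\<bar> \<le> M \<and> \<bar>chi2 x\<bar> \<le> M"
proof -
  have "compact (chi1 ` {0..1})" by (rule compact_continuous_image[OF cont_chi1]) auto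
  then obtain M1 where M1: "\<forall>y\<in>chi1 ` {0..1}. norm y \<le> M1"
    using compact_imp_bounded bounded_iff by metis
  have "compact (chi2 ` {0..1})" by (rule compact_continuous_image[OF cont_chi2]) auto
  then obtain M2 where M2: "\<forall>y\<in>chi2 ` {0..1}. norm y \<le> M2"
    using compact_imp_bounded bounded_iff by metis
  show ?thesis
  proof (intro exI[of _ "max 1 (max M1 M2)"] conjI allI)
    fix x :: real
    show "\<bar>chi1 x\<bar> \<le> max 1 (max M1 M2)"
      using M1 chi1_out[of x] by (cases "x \<in> {0..1}") force+
    show "\<bar>chi2 x\<bar> \<le> max 1 (max M1 M2)"
      using M2 chi2_out[of x] by (cases "x \<in> {0..1}") force+
  qed simp
qed


definition om :: "nat \<Rightarrow> real" where "om K = pi * real K"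
definition sg :: "nat \<Rightarrow> real" where "sg K = (-1) ^ K"

definition vv :: "nat \<Rightarrow> real \<Rightarrow> real" where
  "vv K t = ((1 - cos (om K * t)) + (sg K - 1) * (3 * t^2 - 2 * t^3)) / (om K)^2"
definition vv1 :: "nat \<Rightarrow> real \<Rightarrow> real" where
  "vv1 K t = (om K * sin (om K * t) + (sg K - 1) * (6 * t - 6 * t^2)) / (om K)^2"
definition vv2 :: "nat \<Rightarrow> real \<Rightarrow> real" where
  "vv2 K t = cos (om K * t) + (sg K - 1) * (6 - 12 * t) / (om K)^2"

context
  fixes K :: nat
  assumes K: "K \<ge> 1"
begin

lemma om_pos: "om K > 0" using K by (simp add: om_def)
lemma om_ge: "om K \<ge> 3"
proof -
  have "pi * 1 \<le> pi * real K" using K by (intro mult_left_mono) auto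
  then show ?thesis using pi_gt3 unfolding om_def by linarith
qed
lemma om2_ge: "(om K)^2 \<ge> 9"
proof -
  have "3^2 \<le> (om K)^2" using om_ge by (intro power_mono) auto
  then show ?thesis by simp
qed
lemma sg_sq: "sg K * sg K = 1"
proof -
  have "sg K * sg K = ((-1) * (-1)) ^ K" unfolding sg_def by (simp only: power_mult_distrib)
  then show ?thesis by simp
qed
lemma sg_abs: "\<bar>sg K\<bar> = 1" by (simp add: sg_def power_abs)
lemma sin_om: "sin (om K) = 0" by (simp add: om_def mult.commute sin_npi)
lemma cos_om: "cos (om K) = sg K" by (simp add: om_def sg_def mult.commute cos_npi)

lemma vv_deriv: "(vv K has_real_derivative vv1 K t) (at t)"
  unfolding vv_def[abs_def] vv1_def
  using om_pos
  by (auto intro!: derivative_eq_intros simp: power2_eq_square power3_eq_cube field_simps)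

lemma vv1_deriv: "(vv1 K has_real_derivative vv2 K t) (at t)"
  unfolding vv1_def[abs_def] vv2_def
  using om_pos
  by (auto intro!: derivative_eq_intros simp: power2_eq_square field_simps)

lemma vv_sym: "vv K (1 - r) = sg K * vv K r"
proof -
  have c: "cos (om K * (1 - r)) = sg K * cos (om K * r)"
    by (simp add: right_diff_distrib cos_diff sin_om cos_om)
  have n: "(1 - sg K * cos (om K * r)) + (sg K - 1) * (3 * (1 - r)^2 - 2 * (1 - r)^3)
     = sg K * ((1 - cos (om K * r)) + (sg K - 1) * (3 * r^2 - 2 * r^3)) + (3 * r^2 - 2 * r^3) * (1 - sg K * sg K)"
    by (simp add: algebra_simps power2_eq_square power3_eq_cube)
  show ?thesis unfolding vv_def c n using sg_sq by simp
qed

lemma vv1_sym: "vv1 K (1 - r) = - sg K * vv1 K r"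
proof -
  have c: "sin (om K * (1 - r)) = - sg K * sin (om K * r)"
    by (simp add: right_diff_distrib sin_diff sin_om cos_om)
  have n: "om K * (- sg K * sin (om K * r)) + (sg K - 1) * (6 * (1 - r) - 6 * (1 - r)^2)
     = - sg K * (om K * sin (om K * r) + (sg K - 1) * (6 * r - 6 * r^2)) - (6 * r - 6 * r^2) * (1 - sg K * sg K)"
    by (simp add: algebra_simps power2_eq_square)
  show ?thesis unfolding vv1_def c n using sg_sq by simp
qed

lemma one_minus_cos: "\<bar>1 - cos (x::real)\<bar> \<le> x^2 / 2"
proof -
  have "cos x = cos (2 * (x/2))" by simp
  also have "\<dots> = 1 - 2 * sin (x/2) ^ 2" by (rule cos_double_sin)
  finally have e: "1 - cos x = 2 * sin (x/2) ^ 2" by simp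
  have "sin (x/2) ^ 2 \<le> (x/2)^2"
    using abs_sin_x_le_abs_x[of "x/2"] by (metis abs_le_square_iff)
  then show ?thesis unfolding e by (simp add: power_divide)
qed

lemma vv_bound0: "0 \<le> t \<Longrightarrow> t \<le> 1 \<Longrightarrow> \<bar>vv K t\<bar> \<le> 2 * t^2"
proof -
  assume t: "0 \<le> t" "t \<le> 1"
  have h1: "\<bar>1 - cos (om K * t)\<bar> \<le> (om K)^2 * t^2 / 2"
    using one_minus_cos[of "om K * t"] by (simp add: power_mult_distrib)
  have t3: "t^3 \<le> t^2" using t by (intro power_decreasing) auto
  have p: "0 \<le> 3 * t^2 - 2 * t^3" "3 * t^2 - 2 * t^3 \<le> 3 * t^2"
    using t t3 zero_le_power2[of t] zero_le_power[OF t(1), of 3] by linarith+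
  have s: "\<bar>sg K - 1\<bar> \<le> 2" using sg_abs by linarith
  have h2: "\<bar>(sg K - 1) * (3 * t^2 - 2 * t^3)\<bar> \<le> 2 * (3 * t^2)"
    unfolding abs_mult using s p by (intro mult_mono) auto
  have "\<bar>(1 - cos (om K * t)) + (sg K - 1) * (3 * t^2 - 2 * t^3)\<bar> \<le> (om K)^2 * t^2 / 2 + 6 * t^2"
    using h1 h2 abs_triangle_ineq[of "1 - cos (om K * t)" "(sg K - 1) * (3 * t^2 - 2 * t^3)"] by linarith
  then have "\<bar>vv K t\<bar> \<le> ((om K)^2 * t^2 / 2 + 6 * t^2) / (om K)^2"
    unfolding vv_def abs_divide using om_pos by (simp add: divide_right_mono)
  also have "\<dots> = t^2 / 2 + 6 * t^2 / (om K)^2" using om_pos by (simp add: field_simps)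
  also have "\<dots> \<le> t^2 / 2 + 6 * t^2 / 9"
    using om2_ge by (intro add_left_mono divide_left_mono) auto
  also have "\<dots> \<le> 2 * t^2" by simp
  finally show ?thesis .
qed

lemma vv1_bound0: "0 \<le> t \<Longrightarrow> t \<le> 1 \<Longrightarrow> \<bar>vv1 K t\<bar> \<le> 4 * t"
proof -
  assume t: "0 \<le> t" "t \<le> 1"
  have h1: "\<bar>om K * sin (om K * t)\<bar> \<le> (om K)^2 * t"
    using abs_sin_x_le_abs_x[of "om K * t"] om_pos t
    by (simp add: abs_mult power2_eq_square mult_left_mono)
  have t2: "t^2 \<le> t^1" using t by (intro power_decreasing) auto
  have p: "0 \<le> 6 * t - 6 * t^2" "6 * t - 6 * t^2 \<le> 6 * t"
    using t t2 by auto
  have s: "\<bar>sg K - 1\<bar> \<le> 2" using sg_abs by linarith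
  have h2: "\<bar>(sg K - 1) * (6 * t - 6 * t^2)\<bar> \<le> 2 * (6 * t)"
    unfolding abs_mult using s p by (intro mult_mono) auto
  have "\<bar>om K * sin (om K * t) + (sg K - 1) * (6 * t - 6 * t^2)\<bar> \<le> (om K)^2 * t + 12 * t"
    using h1 h2 abs_triangle_ineq[of "om K * sin (om K * t)" "(sg K - 1) * (6 * t - 6 * t^2)"] by linarith
  then have "\<bar>vv1 K t\<bar> \<le> ((om K)^2 * t + 12 * t) / (om K)^2"
    unfolding vv1_def abs_divide using om_pos by (simp add: divide_right_mono)
  also have "\<dots> = t + 12 * t / (om K)^2" using om_pos by (simp add: field_simps)
  also have "\<dots> \<le> t + 12 * t / 9"
    using om2_ge t by (intro add_left_mono divide_left_mono) auto
  also have "\<dots> \<le> 4 * t" using t by simp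
  finally show ?thesis .
qed

lemma vv_bound: "0 \<le> t \<Longrightarrow> t \<le> 1 \<Longrightarrow> \<bar>vv K t\<bar> \<le> 2 / real K ^ 2"
proof -
  assume t: "0 \<le> t" "t \<le> 1"
  have t3: "t^3 \<le> t^2" "t^2 \<le> 1" "0 \<le> t^3" using t by (auto intro: power_decreasing power_le_one)
  have p: "\<bar>3 * t^2 - 2 * t^3\<bar> \<le> 3"
    unfolding abs_le_iff using t3 zero_le_power2[of t] by linarith
  have s: "\<bar>sg K - 1\<bar> \<le> 2" using sg_abs by linarith
  have h2: "\<bar>(sg K - 1) * (3 * t^2 - 2 * t^3)\<bar> \<le> 2 * 3"
    unfolding abs_mult using s p by (intro mult_mono) auto
  have h1: "\<bar>1 - cos (om K * t)\<bar> \<le> 2" using cos_ge_minus_one[of "om K * t"] cos_le_one[of "om K * t"] by linarith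
  have "\<bar>(1 - cos (om K * t)) + (sg K - 1) * (3 * t^2 - 2 * t^3)\<bar> \<le> 8"
    using h1 h2 abs_triangle_ineq[of "1 - cos (om K * t)" "(sg K - 1) * (3 * t^2 - 2 * t^3)"] by linarith
  then have "\<bar>vv K t\<bar> \<le> 8 / (om K)^2"
    unfolding vv_def abs_divide using om_pos by (simp add: divide_right_mono)
  also have "\<dots> = 8 / (pi^2 * real K ^ 2)" by (simp add: om_def power_mult_distrib)
  also have "\<dots> \<le> 8 / (4 * real K ^ 2)"
  proof -
    have "3 * 3 \<le> pi * pi" using pi_gt3 by (intro mult_mono) auto
    then have "4 \<le> pi^2" by (simp add: power2_eq_square)
    then show ?thesis using K by (intro divide_left_mono mult_right_mono) auto
  qed
  also have "\<dots> = 2 / real K ^ 2" by simp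
  finally show ?thesis .
qed

lemma vv2_bound: "0 \<le> t \<Longrightarrow> t \<le> 1 \<Longrightarrow> \<bar>vv2 K t\<bar> \<le> 3"
proof -
  assume t: "0 \<le> t" "t \<le> 1"
  have s: "\<bar>sg K - 1\<bar> \<le> 2" using sg_abs by linarith
  have p: "\<bar>6 - 12 * t\<bar> \<le> 6" using t by auto
  have "\<bar>(sg K - 1) * (6 - 12 * t)\<bar> \<le> 2 * 6" unfolding abs_mult using s p by (intro mult_mono) auto
  then have "\<bar>(sg K - 1) * (6 - 12 * t) / (om K)^2\<bar> \<le> 12 / 9"
    unfolding abs_divide using om2_ge om_pos by (intro frac_le) auto
  then show ?thesis unfolding vv2_def using abs_cos_le_one[of "om K * t"] by linarith
qed

lemma e_mid_bound: "0 \<le> t \<Longrightarrow> t \<le> 1 \<Longrightarrow> \<bar>cos (om K * t) - vv2 K t\<bar> \<le> 2 / real K ^ 2"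
proof -
  assume t: "0 \<le> t" "t \<le> 1"
  have s: "\<bar>sg K - 1\<bar> \<le> 2" using sg_abs by linarith
  have p: "\<bar>6 - 12 * t\<bar> \<le> 6" using t by auto
  have "\<bar>(sg K - 1) * (6 - 12 * t)\<bar> \<le> 2 * 6" unfolding abs_mult using s p by (intro mult_mono) auto
  then have "\<bar>cos (om K * t) - vv2 K t\<bar> \<le> 12 / (om K)^2"
    using om_pos by (simp add: vv2_def abs_divide divide_right_mono)
  also have "\<dots> = 12 / (pi^2 * real K ^ 2)" by (simp add: om_def power_mult_distrib)
  also have "\<dots> \<le> 12 / (6 * real K ^ 2)"
  proof -
    have "3 * 3 \<le> pi * pi" using pi_gt3 by (intro mult_mono) auto
    then have "6 \<le> pi^2" by (simp add: power2_eq_square)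
    then show ?thesis using K by (intro divide_left_mono mult_right_mono) auto
  qed
  also have "\<dots> = 2 / real K ^ 2" by simp
  finally show ?thesis .
qed

end


definition aa :: "real \<Rightarrow> real \<Rightarrow> real" where "aa d t = chi ((1/d) * t + -1)"
definition aa1 :: "real \<Rightarrow> real \<Rightarrow> real" where "aa1 d t = chi1 ((1/d) * t + -1) * (1/d)"
definition aa2 :: "real \<Rightarrow> real \<Rightarrow> real" where "aa2 d t = chi2 ((1/d) * t + -1) * (1/d) * (1/d)"
definition bb :: "real \<Rightarrow> real \<Rightarrow> real" where "bb d t = chi ((-1/d) * t + (1/d - 1))"
definition bb1 :: "real \<Rightarrow> real \<Rightarrow> real" where "bb1 d t = chi1 ((-1/d) * t + (1/d - 1)) * (-1/d)"
definition bb2 :: "real \<Rightarrow> real \<Rightarrow> real" where "bb2 d t = chi2 ((-1/d) * t + (1/d - 1)) * (-1/d) * (-1/d)"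

definition eta :: "real \<Rightarrow> real \<Rightarrow> real" where "eta d t = aa d t * bb d t"
definition eta1 :: "real \<Rightarrow> real \<Rightarrow> real" where "eta1 d t = aa1 d t * bb d t + aa d t * bb1 d t"
definition eta2 :: "real \<Rightarrow> real \<Rightarrow> real" where
  "eta2 d t = aa2 d t * bb d t + 2 * (aa1 d t * bb1 d t) + aa d t * bb2 d t"

definition phi :: "nat \<Rightarrow> real \<Rightarrow> real \<Rightarrow> real" where "phi K d t = eta d t * vv K t"
definition phi1 :: "nat \<Rightarrow> real \<Rightarrow> real \<Rightarrow> real" where
  "phi1 K d t = eta1 d t * vv K t + eta d t * vv1 K t"
definition phi2 :: "nat \<Rightarrow> real \<Rightarrow> real \<Rightarrow> real" where
  "phi2 K d t = eta2 d t * vv K t + 2 * (eta1 d t * vv1 K t) + eta d t * vv2 K t"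

lemma deriv_aff:
  fixes f :: "real \<Rightarrow> real"
  assumes "\<And>y. (f has_real_derivative f' y) (at y)"
  shows "((\<lambda>t. f (a * t + b)) has_real_derivative f' (a * t + b) * a) (at t)"
proof -
  have "((\<lambda>x. a*x+b) has_real_derivative a) (at t)" by (auto intro!: derivative_eq_intros)
  then show ?thesis using DERIV_chain2[of f "f' (a*t+b)" "\<lambda>x. a*x+b" t a UNIV] assms by simp
qed

lemma aa_deriv: "(aa d has_real_derivative aa1 d t) (at t)"
  unfolding aa_def[abs_def] aa1_def by (rule deriv_aff[OF chi_deriv])
lemma aa1_deriv: "(aa1 d has_real_derivative aa2 d t) (at t)"
  unfolding aa1_def[abs_def] aa2_def
  using DERIV_cmult_right[OF deriv_aff[OF chi1_deriv, where a="1/d" and b="-1" and t=t], where c="1/d"] by simp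
lemma bb_deriv: "(bb d has_real_derivative bb1 d t) (at t)"
  unfolding bb_def[abs_def] bb1_def by (rule deriv_aff[OF chi_deriv])
lemma bb1_deriv: "(bb1 d has_real_derivative bb2 d t) (at t)"
  unfolding bb1_def[abs_def] bb2_def
  using DERIV_cmult_right[OF deriv_aff[OF chi1_deriv, where a="-1/d" and b="1/d - 1" and t=t], where c="-1/d"] by simp

lemma eta_deriv: "(eta d has_real_derivative eta1 d t) (at t)"
  unfolding eta_def[abs_def] eta1_def
  by (auto intro!: derivative_eq_intros aa_deriv bb_deriv)
lemma eta1_deriv: "(eta1 d has_real_derivative eta2 d t) (at t)"
  unfolding eta1_def[abs_def] eta2_def
  by (auto intro!: derivative_eq_intros aa_deriv bb_deriv aa1_deriv bb1_deriv simp: algebra_simps)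

context
  fixes K :: nat
  assumes K: "K \<ge> 1"
begin

lemma phi_deriv: "(phi K d has_real_derivative phi1 K d t) (at t)"
  unfolding phi_def[abs_def] phi1_def
  by (auto intro!: derivative_eq_intros eta_deriv vv_deriv[OF K])
lemma phi1_deriv: "(phi1 K d has_real_derivative phi2 K d t) (at t)"
  unfolding phi1_def[abs_def] phi2_def
  by (auto intro!: derivative_eq_intros eta_deriv eta1_deriv vv_deriv[OF K] vv1_deriv[OF K]
      simp: algebra_simps)

lemma deriv2_phi: "deriv (deriv (phi K d)) = phi2 K d"
proof -
  have "deriv (phi K d) = phi1 K d"
    by (rule ext) (rule DERIV_imp_deriv[OF phi_deriv])
  moreover have "deriv (phi1 K d) = phi2 K d"
    by (rule ext) (rule DERIV_imp_deriv[OF phi1_deriv])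
  ultimately show ?thesis by simp
qed

end

lemma Ck_power: "Ck n f \<Longrightarrow> Ck n (\<lambda>x. f x ^ m)"
  by (induction m) (auto intro: Ck_const Ck_mult)

lemma Ck_vv: "Ck n (vv K)"
proof -
  have c: "Ck n (\<lambda>t. cos (om K * t))" using Ck_affine[OF Ck_cos, of n "om K" 0] by simp
  have "Ck n (\<lambda>t. ((1 - cos (om K * t)) + (sg K - 1) * (3 * t^2 - 2 * t^3)) * inverse ((om K)^2))"
    by (intro Ck_mult Ck_add Ck_diff_fun Ck_const c Ck_power Ck_id)
  then show ?thesis by (simp add: vv_def[abs_def] divide_inverse)
qed

lemma Ck_phi: "Ck n (phi K d)"
proof -
  have "Ck n (\<lambda>t. (chi ((1/d) * t + -1) * chi ((-1/d) * t + (1/d - 1))) * vv K t)"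
    by (intro Ck_mult Ck_affine Ck_chi Ck_vv)
  then show ?thesis by (simp add: phi_def[abs_def] eta_def aa_def bb_def)
qed

lemma test_fun_phi:
  assumes d: "0 < d" "d \<le> 1/8"
  shows "test_fun (phi K d)"
proof -
  have A: "\<forall>n x. (deriv ^^ n) (phi K d) differentiable at x"
    using Ck_phi[of _ K d] by (auto simp: Ck_def)
  have B: "phi K d x = 0" if "x \<notin> {d..1-d}" for x
  proof -
    have "x < d \<or> x > 1 - d" using that by auto
    then show "phi K d x = 0"
    proof
      assume "x < d"
      then have "(1/d) * x + -1 \<le> 0" using d by (simp add: field_simps)
      then show ?thesis by (simp add: phi_def eta_def aa_def chi_le0)
    next
      assume "x > 1 - d"
      moreover have "(-1/d) * x + (1/d - 1) = ((1 - x) - d) / d" using d by (simp add: field_simps)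
      ultimately have "(-1/d) * x + (1/d - 1) \<le> 0" using d by (simp add: divide_nonpos_pos)
      then show ?thesis by (simp add: phi_def eta_def bb_def chi_le0)
    qed
  qed
  show ?thesis unfolding test_fun_def
    apply (rule conjI[OF A])
    apply (rule exI[of _ d], rule exI[of _ "1-d"])
    using B d by auto
qed


definition Mc :: real where "Mc = (SOME M. M > 0 \<and> (\<forall>x. \<bar>chi1 x\<bar> \<le> M \<and> \<bar>chi2 x\<bar> \<le> M))"

lemma Mc: "Mc > 0" "\<bar>chi1 x\<bar> \<le> Mc" "\<bar>chi2 x\<bar> \<le> Mc"
  using someI_ex[OF chi_derivs_bounded] unfolding Mc_def[symmetric] by auto

lemma abs_mult_le: "\<bar>x\<bar> \<le> X \<Longrightarrow> \<bar>y\<bar> \<le> Y \<Longrightarrow> \<bar>x * y\<bar> \<le> X * (Y::real)"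
  unfolding abs_mult by (intro mult_mono) auto

context
  fixes d :: real
  assumes d: "0 < d" "d \<le> 1/8"
begin

lemma aa_le: "\<bar>aa d t\<bar> \<le> 1" using chi_bounds by (simp add: aa_def)
lemma bb_le: "\<bar>bb d t\<bar> \<le> 1" using chi_bounds by (simp add: bb_def)
lemma aa1_le: "\<bar>aa1 d t\<bar> \<le> Mc / d" using Mc d by (simp add: aa1_def abs_mult divide_right_mono)
lemma bb1_le: "\<bar>bb1 d t\<bar> \<le> Mc / d" using Mc d by (simp add: bb1_def abs_mult divide_right_mono)
lemma aa2_le: "\<bar>aa2 d t\<bar> \<le> Mc / d^2"
  using Mc d by (simp add: aa2_def abs_mult divide_right_mono power2_eq_square)
lemma bb2_le: "\<bar>bb2 d t\<bar> \<le> Mc / d^2"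
  using Mc d by (simp add: bb2_def abs_mult divide_right_mono power2_eq_square)

lemma aa_right: "t > 2 * d \<Longrightarrow> aa d t = 1 \<and> aa1 d t = 0 \<and> aa2 d t = 0"
proof -
  assume t: "t > 2 * d"
  have "(1/d) * t + -1 > 1" using t d by (simp add: field_simps)
  then show ?thesis using chi_ge1 chi1_out chi2_out by (simp add: aa_def aa1_def aa2_def)
qed

lemma bb_left: "t < 1 - 2 * d \<Longrightarrow> bb d t = 1 \<and> bb1 d t = 0 \<and> bb2 d t = 0"
proof -
  assume t: "t < 1 - 2 * d"
  have "(-1/d) * t + (1/d - 1) = ((1 - t) - d) / d" using d by (simp add: field_simps)
  moreover have "((1 - t) - d) / d > 1" using t d by (simp add: field_simps)
  ultimately have "(-1/d) * t + (1/d - 1) > 1" by simp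
  then show ?thesis using chi_ge1 chi1_out chi2_out by (simp add: bb_def bb1_def bb2_def)
qed

context
  fixes K :: nat
  assumes K: "K \<ge> 1"
begin

lemma phi_le: "0 \<le> t \<Longrightarrow> t \<le> 1 \<Longrightarrow> \<bar>phi K d t\<bar> \<le> 2 / real K ^ 2"
proof -
  assume t: "0 \<le> t" "t \<le> 1"
  have "\<bar>eta d t\<bar> \<le> 1 * 1" unfolding eta_def by (rule abs_mult_le[OF aa_le bb_le])
  then have "\<bar>phi K d t\<bar> \<le> 1 * (2 / real K ^ 2)"
    unfolding phi_def using vv_bound[OF K t] by (intro abs_mult_le) auto
  then show ?thesis by simp
qed

definition Ae :: real where "Ae = 4 + 42 * Mc"

lemma e_mid: "3 * d < t \<Longrightarrow> t < 1 - 3 * d \<Longrightarrow> \<bar>cos (om K * t) - phi2 K d t\<bar> \<le> 2 / real K ^ 2"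
proof -
  assume t: "3 * d < t" "t < 1 - 3 * d"
  have a: "aa d t = 1 \<and> aa1 d t = 0 \<and> aa2 d t = 0" using t d by (intro aa_right) auto
  have b: "bb d t = 1 \<and> bb1 d t = 0 \<and> bb2 d t = 0" using t d by (intro bb_left) auto
  have "phi2 K d t = vv2 K t" using a b by (simp add: phi2_def eta_def eta1_def eta2_def)
  then show ?thesis using e_mid_bound[OF K, of t] t d by simp
qed

lemma layer_bound:
  assumes "\<bar>x2\<bar> \<le> Mc / d^2" "\<bar>x1\<bar> \<le> Mc / d" "\<bar>x0\<bar> \<le> 1"
    and "\<bar>v\<bar> \<le> 2 * r^2" "\<bar>v1\<bar> \<le> 4 * r" "\<bar>v2\<bar> \<le> 3" "0 \<le> r" "r \<le> 3 * d"
  shows "\<bar>c - (x2 * v + 2 * (x1 * v1) + x0 * v2)\<bar> \<le> \<bar>c\<bar> + 3 + 42 * Mc"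
proof -
  have r2: "r^2 \<le> (3*d)^2" using assms by (intro power_mono) auto
  have "\<bar>x2 * v\<bar> \<le> (Mc / d^2) * (2 * (3*d)^2)"
    using assms r2 by (intro abs_mult_le) auto
  also have "\<dots> = 18 * Mc" using d by (simp add: field_simps power2_eq_square)
  finally have h1: "\<bar>x2 * v\<bar> \<le> 18 * Mc" .
  have "\<bar>x1 * v1\<bar> \<le> (Mc / d) * (4 * (3*d))"
    using assms by (intro abs_mult_le) auto
  also have "\<dots> = 12 * Mc" using d by (simp add: field_simps)
  finally have h2: "\<bar>x1 * v1\<bar> \<le> 12 * Mc" .
  have h3: "\<bar>x0 * v2\<bar> \<le> 1 * 3" using assms by (intro abs_mult_le) auto
  show ?thesis using h1 h2 h3 by (simp add: abs_le_iff) linarith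
qed

lemma e_left: "0 \<le> t \<Longrightarrow> t \<le> 3 * d \<Longrightarrow> \<bar>cos (om K * t) - phi2 K d t\<bar> \<le> Ae"
proof -
  assume t: "0 \<le> t" "t \<le> 3 * d"
  have t1: "t \<le> 1" using t d by auto
  have b: "bb d t = 1 \<and> bb1 d t = 0 \<and> bb2 d t = 0" using t d by (intro bb_left) auto
  have "phi2 K d t = aa2 d t * vv K t + 2 * (aa1 d t * vv1 K t) + aa d t * vv2 K t"
    using b by (simp add: phi2_def eta_def eta1_def eta2_def)
  then have "\<bar>cos (om K * t) - phi2 K d t\<bar> \<le> \<bar>cos (om K * t)\<bar> + 3 + 42 * Mc"
    using layer_bound[OF aa2_le aa1_le aa_le vv_bound0[OF K t(1) t1] vv1_bound0[OF K t(1) t1]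
        vv2_bound[OF K t(1) t1] t] by simp
  then show ?thesis using abs_cos_le_one[of "om K * t"] unfolding Ae_def by linarith
qed

lemma e_right: "1 - 3 * d \<le> t \<Longrightarrow> t \<le> 1 \<Longrightarrow> \<bar>cos (om K * t) - phi2 K d t\<bar> \<le> Ae"
proof -
  assume t: "1 - 3 * d \<le> t" "t \<le> 1"
  define r where "r = 1 - t"
  have r: "0 \<le> r" "r \<le> 3 * d" "r \<le> 1" using t d by (auto simp: r_def)
  have t0: "0 \<le> t" using t d by auto
  have tr: "t = 1 - r" by (simp add: r_def)
  have a: "aa d t = 1 \<and> aa1 d t = 0 \<and> aa2 d t = 0" using t d by (intro aa_right) auto
  have "phi2 K d t = bb2 d t * vv K t + 2 * (bb1 d t * vv1 K t) + bb d t * vv2 K t"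
    using a by (simp add: phi2_def eta_def eta1_def eta2_def)
  moreover have "\<bar>vv K t\<bar> \<le> 2 * r^2"
    using vv_bound0[OF K r(1) r(3)] unfolding tr vv_sym[OF K] abs_mult sg_abs[OF K] by simp
  moreover have "\<bar>vv1 K t\<bar> \<le> 4 * r"
    using vv1_bound0[OF K r(1) r(3)] unfolding tr vv1_sym[OF K] abs_mult abs_minus sg_abs[OF K] by simp
  ultimately have "\<bar>cos (om K * t) - phi2 K d t\<bar> \<le> \<bar>cos (om K * t)\<bar> + 3 + 42 * Mc"
    using layer_bound[OF bb2_le bb1_le bb_le _ _ vv2_bound[OF K t0 t(2)] r(1) r(2)] by simp
  then show ?thesis using abs_cos_le_one[of "om K * t"] unfolding Ae_def by linarith
qed

end
end


abbreviation "M01 \<equiv> lebesgue_on {0..(1::real)}"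

lemma amgm: "a > 0 \<Longrightarrow> \<bar>x * y\<bar> \<le> (a * x^2 + y^2 / a) / (2::real)"
proof -
  assume a: "a > 0"
  have "0 \<le> (a * \<bar>x\<bar> - \<bar>y\<bar>)^2" by simp
  then have "2 * a * \<bar>x\<bar> * \<bar>y\<bar> \<le> a^2 * x^2 + y^2"
    by (simp add: power2_eq_square algebra_simps)
  then have "2 * \<bar>x * y\<bar> * a \<le> a^2 * x^2 + y^2" by (simp add: abs_mult algebra_simps)
  then have "2 * \<bar>x * y\<bar> \<le> (a^2 * x^2 + y^2) / a" by (subst pos_le_divide_eq[OF a])
  also have "(a^2 * x^2 + y^2) / a = a * x^2 + y^2 / a" using a by (simp add: field_simps power2_eq_square)
  finally show ?thesis by simp
qed

lemma cont_meas: "continuous_on {0..1} e \<Longrightarrow> e \<in> borel_measurable M01"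
  by (rule continuous_imp_measurable_on_sets_lebesgue) auto

lemma cont_int: "continuous_on {0..1} e \<Longrightarrow> integrable M01 (e :: real \<Rightarrow> real)"
  by (rule continuous_imp_integrable_real)

lemma cs_lemma:
  fixes f e :: "real \<Rightarrow> real"
  assumes f: "f \<in> borel_measurable M01" "integrable M01 (\<lambda>x. (f x)^2)"
    and e: "continuous_on {0..1} e"
    and E: "integral\<^sup>L M01 (\<lambda>x. (e x)^2) \<le> E^2" "0 \<le> E"
    and N: "integral\<^sup>L M01 (\<lambda>x. (f x)^2) \<le> N^2" "0 \<le> N"
  shows "integrable M01 (\<lambda>x. f x * e x)" "\<bar>integral\<^sup>L M01 (\<lambda>x. f x * e x)\<bar> \<le> E * N"
proof -
  have em: "e \<in> borel_measurable M01" by (rule cont_meas[OF e])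
  have e2: "integrable M01 (\<lambda>x. (e x)^2)"
    by (rule cont_int) (intro continuous_intros e)
  have b: "integrable M01 (\<lambda>x. (a * (f x)^2 + (e x)^2 / a) / 2)" for a
    using f e2 by auto
  show fi: "integrable M01 (\<lambda>x. f x * e x)"
  proof (rule measurable_bounded_by_integrable_imp_lebesgue_integrable[OF _ b[of 1]])
    show "(\<lambda>x. f x * e x) \<in> borel_measurable M01" using f em by measurable
    show "norm (f x * e x) \<le> (1 * (f x)\<^sup>2 + (e x)\<^sup>2 / 1) / 2" for x
      using amgm[of 1 "f x" "e x"] by simp
  qed auto
  have main: "\<bar>integral\<^sup>L M01 (\<lambda>x. f x * e x)\<bar> \<le> (a * N^2 + E^2 / a) / 2" if a: "a > 0" for a
  proof -
    have "\<bar>integral\<^sup>L M01 (\<lambda>x. f x * e x)\<bar> \<le> integral\<^sup>L M01 (\<lambda>x. (a * (f x)^2 + (e x)^2 / a) / 2)"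
      using integral_abs_bound_integral[OF fi b[of a]] amgm[OF a] by simp
    also have "\<dots> = (a * integral\<^sup>L M01 (\<lambda>x. (f x)^2) + integral\<^sup>L M01 (\<lambda>x. (e x)^2) / a) / 2"
      using f e2 by simp
    also have "\<dots> \<le> (a * N^2 + E^2 / a) / 2"
      using a N E by (intro divide_right_mono add_mono mult_left_mono) auto
    finally show ?thesis .
  qed
  show "\<bar>integral\<^sup>L M01 (\<lambda>x. f x * e x)\<bar> \<le> E * N"
  proof (rule field_le_epsilon)
    fix eps :: real assume eps: "eps > 0"
    define h where "h = min 1 (eps / (E + N + 1))"
    have h3: "h \<le> eps / (E + N + 1)" by (simp add: h_def)
    have h: "h > 0" "h \<le> 1" "h * (E + N + 1) \<le> eps"
      using eps E N apply (auto simp: h_def)[2]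
      using h3 E N by (subst (asm) pos_le_divide_eq) auto
    define a where "a = (E + h) / (N + h)"
    have a: "a > 0" using h E N by (simp add: a_def)
    have "(a * N^2 + E^2 / a) / 2 \<le> (a * (N + h)^2 + (E + h)^2 / a) / 2"
      using a h E N by (intro divide_right_mono add_mono mult_left_mono power_mono) auto
    also have "\<dots> = (E + h) * (N + h)"
    proof -
      have p: "N + h > 0" "E + h > 0" using h E N by auto
      have 1: "a * (N + h)^2 = (E + h) * (N + h)"
        using p unfolding a_def by (simp add: power2_eq_square)
      have 2: "(E + h)^2 / a = (E + h) * (N + h)"
        using p unfolding a_def by (simp add: power2_eq_square)
      show ?thesis unfolding 1 2 by simp
    qed
    also have "\<dots> = E * N + h * (E + N + h)" by (simp add: algebra_simps)
    also have "\<dots> \<le> E * N + h * (E + N + 1)"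
      using h E N by (intro add_left_mono mult_left_mono) auto
    also have "\<dots> \<le> E * N + eps" using h by simp
    finally show "\<bar>integral\<^sup>L M01 (\<lambda>x. f x * e x)\<bar> \<le> E * N + eps" using main[OF a] by simp
  qed
qed

lemma measure_Icc_leb: "a \<le> b \<Longrightarrow> measure lebesgue {a..b::real} = b - a"
  by (simp add: measure_def)

lemma measure_layer:
  assumes d: "0 < d" "d \<le> 1/8"
  shows "measure M01 ({0..3*d} \<union> {1-3*d..1}) \<le> 6 * d"
proof -
  have "measure M01 ({0..3*d} \<union> {1-3*d..1}) = measure lebesgue ({0..3*d} \<union> {1-3*d..1})"
    using d by (intro measure_restrict_space) auto
  also have "\<dots> \<le> measure lebesgue {0..3*d} + measure lebesgue {1-3*d..1}"
    by (intro measure_Un_le) auto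
  also have "\<dots> = 6 * d" using d by (simp add: measure_Icc_leb)
  finally show ?thesis .
qed

lemma measure_M01: "measure M01 {0..1} = 1"
proof -
  have "measure M01 {0..1} = measure lebesgue {0..1::real}"
    by (intro measure_restrict_space) auto
  then show ?thesis by (simp add: measure_Icc_leb)
qed


lemma sq_le_of_abs: "\<bar>x\<bar> \<le> B \<Longrightarrow> x^2 \<le> (B::real)^2"
  by (metis abs_le_square_iff abs_of_nonneg abs_ge_zero order_trans)

lemma main_cos:
  assumes H: "H2_with_deriv f g" and K: "K \<ge> 1"
  shows "\<bar>integral\<^sup>L M01 (\<lambda>t. f t * cos (om K * t))\<bar>
           \<le> (sqrt (Ae^2 + 4) + 2) / real K^2 * H2_norm f g"
proof -
  have fm: "f \<in> borel_measurable M01" and f2: "integrable M01 (\<lambda>x. (f x)^2)"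
   and gm: "g \<in> borel_measurable M01" and g2: "integrable M01 (\<lambda>x. (g x)^2)"
   and weak: "\<And>\<phi>. test_fun \<phi> \<Longrightarrow> integral\<^sup>L M01 (\<lambda>x. f x * deriv (deriv \<phi>) x) = integral\<^sup>L M01 (\<lambda>x. g x * \<phi> x)"
    using H by (auto simp: H2_with_deriv_def L2_01_def)
  define N where "N = H2_norm f g"
  have If: "integral\<^sup>L M01 (\<lambda>x. (f x)^2) \<ge> 0" and Ig: "integral\<^sup>L M01 (\<lambda>x. (g x)^2) \<ge> 0"
    by (auto intro!: integral_nonneg)
  have N2: "N^2 = integral\<^sup>L M01 (\<lambda>x. (f x)^2) + integral\<^sup>L M01 (\<lambda>x. (g x)^2)"
    using If Ig by (simp add: N_def H2_norm_def)
  have N0: "N \<ge> 0" by (simp add: N_def H2_norm_def)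
  have Nf: "integral\<^sup>L M01 (\<lambda>x. (f x)^2) \<le> N^2" and Ng: "integral\<^sup>L M01 (\<lambda>x. (g x)^2) \<le> N^2"
    using N2 If Ig by auto
  have K4: "real K ^ 4 \<ge> 1" using K by simp
  define d where "d = 1 / (8 * real K ^ 4)"
  have d: "0 < d" "d \<le> 1/8"
  proof -
    show "0 < d" using K by (simp add: d_def)
    have "8 \<le> 8 * real K ^ 4" using K4 by simp
    then show "d \<le> 1/8" unfolding d_def using K by (intro divide_left_mono) auto
  qed
  have K2: "real K ^ 2 > 0" using K by simp
  have wk: "integral\<^sup>L M01 (\<lambda>x. f x * phi2 K d x) = integral\<^sup>L M01 (\<lambda>x. g x * phi K d x)"
    using weak[OF test_fun_phi[OF d, where K=K]] deriv2_phi[OF K, of d] by simp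
  have phic: "continuous_on {0..1} (phi K d)"
    using phi_deriv[OF K] by (meson DERIV_isCont continuous_at_imp_continuous_on)
  have "(deriv ^^ 2) (phi K d) differentiable at x" for x
    using Ck_phi[of 2 K d] by (auto simp: Ck_def)
  then have "phi2 K d differentiable at x" for x
    using deriv2_phi[OF K, of d] by (simp add: numeral_2_eq_2)
  then have phi2c: "continuous_on {0..1} (phi2 K d)"
    by (meson differentiable_imp_continuous_within continuous_at_imp_continuous_on)
  define e where "e = (\<lambda>t. cos (om K * t) - phi2 K d t)"
  have ec: "continuous_on {0..1} e" unfolding e_def by (intro continuous_intros phi2c)
  define L where "L = {0..3*d} \<union> {1-3*d..(1::real)}"
  have LM: "L \<in> sets M01" using d by (auto simp: L_def sets_restrict_space_iff)
  have Lint: "integrable M01 (indicator L :: real \<Rightarrow> real)"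
  proof (rule measurable_bounded_by_integrable_imp_lebesgue_integrable[where g="\<lambda>x. 1"])
    show "indicator L \<in> borel_measurable M01" using LM by (rule borel_measurable_indicator)
    show "integrable M01 (\<lambda>x. 1::real)" by (rule cont_int) auto
  qed (auto simp: indicator_def)
  have epw: "(e t)^2 \<le> Ae^2 * indicator L t + (2 / real K^2)^2" if t: "t \<in> {0..1}" for t
  proof (cases "t \<in> L")
    case True
    then have "\<bar>e t\<bar> \<le> Ae" unfolding e_def L_def using e_left[OF d K] e_right[OF d K] t by auto
    then show ?thesis using True sq_le_of_abs by (simp add: add_increasing2)
  next
    case False
    then have "3 * d < t" "t < 1 - 3 * d" using t by (auto simp: L_def)
    then have "\<bar>e t\<bar> \<le> 2 / real K^2" unfolding e_def using e_mid[OF d K] by auto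
    then show ?thesis using False sq_le_of_abs by simp
  qed
  have "integral\<^sup>L M01 (\<lambda>t. (e t)^2) \<le> integral\<^sup>L M01 (\<lambda>t. Ae^2 * indicator L t + (2 / real K^2)^2)"
    using epw Lint by (intro integral_mono) (auto intro!: cont_int continuous_intros ec)
  also have "\<dots> = Ae^2 * measure M01 L + (2 / real K^2)^2"
  proof -
    have "L \<inter> {0..1} = L" using d by (auto simp: L_def)
    then show ?thesis using Lint measure_M01 by simp
  qed
  also have "\<dots> \<le> Ae^2 * (6 * d) + (2 / real K^2)^2"
    using measure_layer[OF d] by (simp add: L_def mult_left_mono)
  also have "\<dots> \<le> (sqrt (Ae^2 + 4) / real K^2)^2"
  proof -
    have k4: "(real K ^ 2)^2 = real K ^ 4" by (simp flip: power_mult)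
    have 1: "(sqrt (Ae^2 + 4) / real K^2)^2 = (Ae^2 + 4) / real K ^ 4"
      by (simp add: power_divide k4)
    have 2: "Ae^2 * (6 * d) + (2 / real K^2)^2 = (3/4 * Ae^2 + 4) / real K ^ 4"
      using K by (simp add: d_def power_divide k4 field_simps)
    show ?thesis unfolding 1 2 using K by (intro divide_right_mono) auto
  qed
  finally have Ie: "integral\<^sup>L M01 (\<lambda>t. (e t)^2) \<le> (sqrt (Ae^2 + 4) / real K^2)^2" .
  have Ip: "integral\<^sup>L M01 (\<lambda>t. (phi K d t)^2) \<le> (2 / real K^2)^2"
  proof -
    have "integral\<^sup>L M01 (\<lambda>t. (phi K d t)^2) \<le> integral\<^sup>L M01 (\<lambda>t. (2 / real K^2)^2)"
      using phi_le[OF d K] sq_le_of_abs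
      by (intro integral_mono) (auto intro!: cont_int continuous_intros phic)
    also have "\<dots> = (2 / real K^2)^2" using measure_M01 by simp
    finally show ?thesis .
  qed
  have cs1: "integrable M01 (\<lambda>x. f x * e x)" "\<bar>integral\<^sup>L M01 (\<lambda>x. f x * e x)\<bar> \<le> sqrt (Ae^2 + 4) / real K^2 * N"
    using cs_lemma[OF fm f2 ec Ie _ Nf N0] K2 by auto
  have cs2: "\<bar>integral\<^sup>L M01 (\<lambda>x. g x * phi K d x)\<bar> \<le> 2 / real K^2 * N"
    using cs_lemma[OF gm g2 phic Ip _ Ng N0] K2 by auto
  have I2: "integral\<^sup>L M01 (\<lambda>t. (phi2 K d t)^2) \<ge> 0" by (auto intro!: integral_nonneg)
  have cs3: "integrable M01 (\<lambda>x. f x * phi2 K d x)"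
    using cs_lemma(1)[OF fm f2 phi2c _ _ Nf N0, of "sqrt (integral\<^sup>L M01 (\<lambda>t. (phi2 K d t)^2))"] I2 by simp
  have "integral\<^sup>L M01 (\<lambda>t. f t * cos (om K * t)) = integral\<^sup>L M01 (\<lambda>x. f x * e x + f x * phi2 K d x)"
    by (simp add: e_def algebra_simps)
  also have "\<dots> = integral\<^sup>L M01 (\<lambda>x. f x * e x) + integral\<^sup>L M01 (\<lambda>x. g x * phi K d x)"
    using cs1(1) cs3 wk by simp
  finally have "\<bar>integral\<^sup>L M01 (\<lambda>t. f t * cos (om K * t))\<bar> \<le> sqrt (Ae^2 + 4) / real K^2 * N + 2 / real K^2 * N"
    using cs1(2) cs2 by linarith
  then show ?thesis by (simp add: N_def add_divide_distrib distrib_right)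
qed


lemma tent_hi:
  fixes P Q H :: "real \<Rightarrow> 'b::euclidean_space"
  assumes P: "(P has_integral A) {0..1}" and Q: "(Q has_integral B) {0..1}"
   and HP: "\<And>y. y \<in> {0..1/2} \<Longrightarrow> H y = P ((-2) * y + 1)"
   and HQ: "\<And>y. y \<in> {1/2..1} \<Longrightarrow> H y = Q (2 * y + -1)"
  shows "(H has_integral ((1/2) *\<^sub>R A + (1/2) *\<^sub>R B)) {0..1}"
proof -
  have P': "(P has_integral A) (cbox 0 1)" using P by simp
  have Q': "(Q has_integral B) (cbox 0 1)" using Q by simp
  have e1: "(\<lambda>x. (1 / (-2)) *\<^sub>R x + -((1 / (-2)) *\<^sub>R (1::real))) = (\<lambda>x. (-1/2) * x + 1/2)"
    by (auto simp: field_simps)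
  have i1: "(\<lambda>x. (1 / (-2)) *\<^sub>R x + -((1 / (-2)) *\<^sub>R (1::real))) ` cbox 0 1 = {0..1/2}"
    unfolding e1 by (simp only: image_affinity_atLeastAtMost interval_cbox[symmetric]) simp
  have e2: "(\<lambda>x. (1 / 2) *\<^sub>R x + -((1 / 2) *\<^sub>R (-1::real))) = (\<lambda>x. (1/2) * x + 1/2)"
    by (auto simp: field_simps)
  have i2: "(\<lambda>x. (1 / 2) *\<^sub>R x + -((1 / 2) *\<^sub>R (-1::real))) ` cbox 0 1 = {1/2..1}"
    unfolding e2 by (simp only: image_affinity_atLeastAtMost interval_cbox[symmetric]) simp
  have a1: "((\<lambda>x. P ((-2) * x + 1)) has_integral (1/2) *\<^sub>R A) {0..1/2}"
    using has_integral_affinity[OF P', of "-2" 1] i1 by simp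
  have a2: "((\<lambda>x. Q (2 * x + -1)) has_integral (1/2) *\<^sub>R B) {1/2..1}"
    using has_integral_affinity[OF Q', of 2 "-1"] i2 by simp
  have b1: "(H has_integral (1/2) *\<^sub>R A) {0..1/2}"
    by (rule has_integral_eq[OF _ a1]) (use HP in auto)
  have b2: "(H has_integral (1/2) *\<^sub>R B) {1/2..1}"
    by (rule has_integral_eq[OF _ a2]) (use HQ in auto)
  show ?thesis by (rule has_integral_combine[OF _ _ b1 b2]) auto
qed

lemma cis_sum: "cis a + cis (-a) = complex_of_real (2 * cos a)"
  by (simp add: complex_eq_iff)

lemma exp_as_cis: "exp (- (2 * complex_of_real pi * \<i> * of_int k * complex_of_real y)) = cis (-(2 * pi * of_int k * y))"
  by (simp add: cis_conv_exp mult_ac)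

lemma fourier_tent:
  fixes f :: "real \<Rightarrow> real" and k :: int
  assumes fm: "f \<in> borel_measurable M01" and f2: "integrable M01 (\<lambda>x. (f x)^2)"
  shows "cmod (fourier_coeff (\<lambda>x. complex_of_real (tent f x)) k)
         = \<bar>integral\<^sup>L M01 (\<lambda>t. f t * cos (pi * of_int k * t))\<bar>"
proof -
  define th where "th t = pi * of_int k * t" for t
  have fi: "integrable M01 f"
  proof (rule measurable_bounded_by_integrable_imp_lebesgue_integrable[OF fm])
    show "integrable M01 (\<lambda>x. (1 * 1^2 + (f x)^2 / 1) / 2)" using f2 by auto
    show "norm (f x) \<le> (1 * 1^2 + (f x)^2 / 1) / 2" for x using amgm[of 1 1 "f x"] by simp
  qed auto
  have fa: "integrable M01 (\<lambda>t. \<bar>f t\<bar>)" using fi by auto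
  define Fp where "Fp t = complex_of_real (f t) * cis (th t)" for t
  define Fm where "Fm t = complex_of_real (f t) * cis (- th t)" for t
  have cm1: "(\<lambda>t. cis (th t)) \<in> borel_measurable M01"
    by (rule continuous_imp_measurable_on_sets_lebesgue) (auto simp: th_def intro!: continuous_intros)
  have cm2: "(\<lambda>t. cis (- th t)) \<in> borel_measurable M01"
    by (rule continuous_imp_measurable_on_sets_lebesgue) (auto simp: th_def intro!: continuous_intros)
  have Fpi: "integrable M01 Fp"
  proof (rule measurable_bounded_by_integrable_imp_lebesgue_integrable[OF _ fa])
    show "Fp \<in> borel_measurable M01" unfolding Fp_def using fm cm1 by measurable
  qed (auto simp: Fp_def norm_mult)
  have Fmi: "integrable M01 Fm"
  proof (rule measurable_bounded_by_integrable_imp_lebesgue_integrable[OF _ fa])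
    show "Fm \<in> borel_measurable M01" unfolding Fm_def using fm cm2 by measurable
  qed (auto simp: Fm_def norm_mult)
  define Ap where "Ap = integral\<^sup>L M01 Fp"
  define Am where "Am = integral\<^sup>L M01 Fm"
  have hp: "(Fp has_integral Ap) {0..1}" unfolding Ap_def by (rule has_integral_integral_lebesgue_on[OF Fpi]) auto
  have hm: "(Fm has_integral Am) {0..1}" unfolding Am_def by (rule has_integral_integral_lebesgue_on[OF Fmi]) auto
  define sig where "sig = cis (- (pi * of_int k))"
  define H where "H y = complex_of_real (tent f y) * exp (- (2 * complex_of_real pi * \<i> * of_int k * complex_of_real y))" for y
  have HH: "(H has_integral ((1/2) *\<^sub>R (sig * Ap) + (1/2) *\<^sub>R (sig * Am))) {0..1}"
  proof (rule tent_hi[OF has_integral_mult_right[OF hp] has_integral_mult_right[OF hm]])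
    fix y :: real assume y: "y \<in> {0..1/2}"
    then have "\<bar>2 * y - 1\<bar> = (-2) * y + 1" by auto
    then have t: "tent f y = f ((-2) * y + 1)" by (simp add: tent_def)
    have "cis (-(2 * pi * of_int k * y)) = sig * cis (th ((-2) * y + 1))"
      by (simp add: sig_def th_def cis_mult algebra_simps)
    then show "H y = sig * Fp ((-2) * y + 1)"
      unfolding H_def t exp_as_cis Fp_def by simp
  next
    fix y :: real assume y: "y \<in> {1/2..1}"
    then have "\<bar>2 * y - 1\<bar> = 2 * y + -1" by auto
    then have t: "tent f y = f (2 * y + -1)" by (simp add: tent_def)
    have "cis (-(2 * pi * of_int k * y)) = sig * cis (- th (2 * y + -1))"
      by (simp add: sig_def th_def cis_mult algebra_simps)
    then show "H y = sig * Fm (2 * y + -1)"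
      unfolding H_def t exp_as_cis Fm_def by simp
  qed
  have ha: "((\<lambda>t. \<bar>f t\<bar>) has_integral integral\<^sup>L M01 (\<lambda>t. \<bar>f t\<bar>)) {0..1}"
    by (rule has_integral_integral_lebesgue_on[OF fa]) auto
  have HA: "((\<lambda>y. \<bar>tent f y\<bar>) has_integral ((1/2) *\<^sub>R integral\<^sup>L M01 (\<lambda>t. \<bar>f t\<bar>) + (1/2) *\<^sub>R integral\<^sup>L M01 (\<lambda>t. \<bar>f t\<bar>))) {0..1}"
  proof (rule tent_hi[OF ha ha])
    fix y :: real assume y: "y \<in> {0..1/2}"
    then have "\<bar>2 * y - 1\<bar> = (-2) * y + 1" by auto
    then show "\<bar>tent f y\<bar> = \<bar>f ((-2) * y + 1)\<bar>" by (simp add: tent_def)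
  next
    fix y :: real assume y: "y \<in> {1/2..1}"
    then have "\<bar>2 * y - 1\<bar> = 2 * y + -1" by auto
    then show "\<bar>tent f y\<bar> = \<bar>f (2 * y + -1)\<bar>" by (simp add: tent_def)
  qed
  have Habs: "H absolutely_integrable_on {0..1}"
  proof (rule absolutely_integrable_integrable_bound[where g="\<lambda>y. \<bar>tent f y\<bar>"])
    show "norm (H x) \<le> \<bar>tent f x\<bar>" for x
      by (simp add: H_def norm_mult exp_as_cis)
    show "H integrable_on {0..1}" using HH by blast
    show "(\<lambda>y. \<bar>tent f y\<bar>) integrable_on {0..1}" using HA by blast
  qed
  have Hi: "integrable M01 H" by (rule absolutely_integrable_imp_integrable[OF Habs]) auto
  have FC: "fourier_coeff (\<lambda>x. complex_of_real (tent f x)) k = integral\<^sup>L M01 H"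
    unfolding fourier_coeff_def by (rule arg_cong[where f="integral\<^sup>L M01"]) (simp add: fun_eq_iff H_def)
  also have "\<dots> = integral {0..1} H" by (rule lebesgue_integral_eq_integral[OF Hi]) auto
  also have "\<dots> = (1/2) *\<^sub>R (sig * Ap) + (1/2) *\<^sub>R (sig * Am)" using HH by (rule integral_unique)
  also have "\<dots> = sig * ((Ap + Am) / 2)" by (simp add: scaleR_conv_of_real algebra_simps)
  also have "Ap + Am = integral\<^sup>L M01 (\<lambda>t. Fp t + Fm t)" using Fpi Fmi by (simp add: Ap_def Am_def)
  also have "\<dots> = integral\<^sup>L M01 (\<lambda>t. complex_of_real (2 * (f t * cos (pi * of_int k * t))))"
  proof -
    have "Fp t + Fm t = complex_of_real (2 * (f t * cos (pi * of_int k * t)))" for t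
      by (simp add: Fp_def Fm_def th_def complex_eq_iff)
    then show ?thesis by simp
  qed
  also have "\<dots> = complex_of_real (2 * integral\<^sup>L M01 (\<lambda>t. f t * cos (pi * of_int k * t)))"
    by (simp only: integral_complex_of_real integral_mult_right_zero)
  finally show ?thesis by (simp add: sig_def norm_mult)
qed


theorem lemma6p1:
  "\<exists>C>0. \<forall>f g. H2_with_deriv f g \<longrightarrow>
     (\<forall>k::int. cmod (fourier_coeff (\<lambda>x. complex_of_real (tent f x)) k)
                * (1 + \<bar>real_of_int k\<bar>)\<^sup>2 \<le> C * H2_norm f g)"
proof -
  define D where "D = sqrt (Ae^2 + 4) + 2"
  have D0: "D \<ge> 0" by (simp add: D_def)
  define C where "C = 4 * D + 1"
  have C0: "C > 0" using D0 by (simp add: C_def)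
  show ?thesis
  proof (intro exI[of _ C] conjI allI impI)
    show "C > 0" by (rule C0)
    fix f g :: "real \<Rightarrow> real" and k :: int
    assume H: "H2_with_deriv f g"
    have fm: "f \<in> borel_measurable M01" and f2: "integrable M01 (\<lambda>x. (f x)^2)"
      using H by (auto simp: H2_with_deriv_def L2_01_def)
    define N where "N = H2_norm f g"
    have If: "integral\<^sup>L M01 (\<lambda>x. (f x)^2) \<ge> 0" and Ig: "integral\<^sup>L (lebesgue_on {0..1}) (\<lambda>x. (g x)^2) \<ge> 0"
      by (auto intro!: integral_nonneg)
    have N2: "N^2 = integral\<^sup>L M01 (\<lambda>x. (f x)^2) + integral\<^sup>L M01 (\<lambda>x. (g x)^2)"
      using If Ig by (simp add: N_def H2_norm_def)
    have N0: "N \<ge> 0" by (simp add: N_def H2_norm_def)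
    have Nf: "integral\<^sup>L M01 (\<lambda>x. (f x)^2) \<le> N^2" using N2 Ig by simp
    have FC: "cmod (fourier_coeff (\<lambda>x. complex_of_real (tent f x)) k)
         = \<bar>integral\<^sup>L M01 (\<lambda>t. f t * cos (pi * of_int k * t))\<bar>"
      by (rule fourier_tent[OF fm f2])
    show "cmod (fourier_coeff (\<lambda>x. complex_of_real (tent f x)) k) * (1 + \<bar>real_of_int k\<bar>)\<^sup>2 \<le> C * H2_norm f g"
    proof (cases "k = 0")
      case True
      have "\<bar>integral\<^sup>L M01 (\<lambda>t. f t * (\<lambda>t. 1) t)\<bar> \<le> 1 * N"
        by (rule cs_lemma(2)[OF fm f2 _ _ _ Nf N0]) (auto simp: measure_M01)
      then have "cmod (fourier_coeff (\<lambda>x. complex_of_real (tent f x)) k) \<le> N"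
        using FC True by simp
      also have "N \<le> C * N"
      proof -
        have "1 * N \<le> C * N" using N0 D0 by (intro mult_right_mono) (auto simp: C_def)
        then show ?thesis by simp
      qed
      finally show ?thesis using True by (simp add: N_def)
    next
      case False
      define K where "K = nat \<bar>k\<bar>"
      have K: "K \<ge> 1" using False by (simp add: K_def)
      have kK: "\<bar>real_of_int k\<bar> = real K" by (simp add: K_def)
      have cs: "cos (pi * of_int k * t) = cos (om K * t)" for t
      proof (cases "k \<ge> 0")
        case True then show ?thesis by (simp add: om_def K_def)
      next
        case False
        then have "pi * of_int k * t = - (om K * t)" by (simp add: om_def K_def)
        then show ?thesis by simp
      qed
      have m: "\<bar>integral\<^sup>L M01 (\<lambda>t. f t * cos (om K * t))\<bar> \<le> D / real K^2 * N"
        using main_cos[OF H K] by (simp add: D_def N_def)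
      have KK: "(1 + real K)^2 \<le> 4 * real K^2"
      proof -
        have "1 + real K \<le> 2 * real K" using K by simp
        then have "(1 + real K)^2 \<le> (2 * real K)^2" by (intro power_mono) auto
        then show ?thesis by (simp add: power_mult_distrib)
      qed
      have "cmod (fourier_coeff (\<lambda>x. complex_of_real (tent f x)) k) * (1 + \<bar>real_of_int k\<bar>)\<^sup>2
          \<le> (D / real K^2 * N) * (4 * real K^2)"
        unfolding FC cs kK using m KK by (intro mult_mono) auto
      also have "\<dots> = 4 * D * N" using K by (simp add: field_simps)
      also have "\<dots> \<le> C * N" using N0 by (simp add: C_def mult_right_mono)
      finally show ?thesis by (simp add: N_def)
    qed
  qed
qed


end
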